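(* Let $(\mathfrak g,[\cdot,\cdot],\alpha,\varepsilon,B)$ be a quadratic multiplicative color Hom-Lie algebra, $\rho$ a representation of $\mathfrak g$ on $(M,\beta)$ with $\alpha^2=\mathrm{id}$ and $\beta^2=\mathrm{id}$, and assume that $\tilde\rho$, $\tilde\rho(x)(f)=-\varepsilon(x,f)\,f\circ\rho(x)$, is a representation of $\mathfrak g$ on $(M^*,\tilde\beta)$, $\tilde\beta(f)=f\circ\beta$. Let $\mathscr D:M\otimes M^*\to\mathfrak g$ be the even linear map defined by $B(x,\mathscr D(m\otimes f))=\langle\rho(\alpha(x))(m),f\rangle$ for all $x\in\mathfrak g$, where $\langle n,f\rangle=\varepsilon(n,f)f(n)$ for homogeneous $n,f$. Then for all homogeneous $x\in\mathfrak g$, $m\in M$, $f\in M^*$: $[x,\mathscr D(m\otimes f)]=\mathscr D\big(\rho(x)(m)\otimes\tilde\beta(f)+\varepsilon(x,m)\,\beta(m)\otimes\tilde\rho(x)(f)\big)$.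
   Context: $\mathbb K$ is a field of characteristic zero and $\Gamma$ an abelian group. A bicharacter is a map $\varepsilon:\Gamma\times\Gamma\to\mathbb K\setminus\{0\}$ with $\varepsilon(a,b)\varepsilon(b,a)=1$, $\varepsilon(a,b+c)=\varepsilon(a,b)\varepsilon(a,c)$, $\varepsilon(a+b,c)=\varepsilon(a,c)\varepsilon(b,c)$; for homogeneous elements $\varepsilon(x,y)=\varepsilon(\deg x,\deg y)$. A color Hom-Lie algebra $(\mathfrak g,[\cdot,\cdot],\alpha,\varepsilon)$: $\Gamma$-graded space, even bilinear bracket, even linear $\alpha$, with $[x,y]=-\varepsilon(x,y)[y,x]$ and $\varepsilon(z,x)[\alpha(x),[y,z]]+\varepsilon(x,y)[\alpha(y),[z,x]]+\varepsilon(y,z)[\alpha(z),[x,y]]=0$; multiplicative means $\alpha([x,y])=[\alpha(x),\alpha(y)]$; quadratic means equipped with a nondegenerate bilinear form $B$ that is $\varepsilon$-symmetric ($B(x,y)=\varepsilon(x,y)B(y,x)$), invariant ($B([x,y],z)=B(x,[y,z])$), with $B(\alpha(x),y)=B(x,\alpha(y))$. A representation of a multiplicative $\mathfrak g$ on $(M,\beta)$ is an even linear $\rho:\mathfrak g\to\mathfrak{gl}(M)$ with $\rho([x,y])\circ\beta=\rho(\alpha(x))\circ\rho(y)-\varepsilon(x,y)\rho(\alpha(y))\circ\rho(x)$ and $\beta\circ\rho(x)=\rho(\alpha(x))\circ\beta$. $M^*$ is the graded dual (degree-$\gamma$ forms vanish on $M_\delta$ for $\delta\ne-\gamma$). *)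

theory Defs
  imports "HOL.Vector_Spaces"
begin

definition bichar :: "('g::ab_group_add \<Rightarrow> 'g \<Rightarrow> 'k::field) \<Rightarrow> bool" where
  "bichar \<epsilon> \<longleftrightarrow> (\<forall>a b. \<epsilon> a b \<noteq> 0) \<and> (\<forall>a b. \<epsilon> a b * \<epsilon> b a = 1)
     \<and> (\<forall>a b c. \<epsilon> a (b + c) = \<epsilon> a b * \<epsilon> a c)
     \<and> (\<forall>a b c. \<epsilon> (a + b) c = \<epsilon> a c * \<epsilon> b c)"

definition graded_space ::
  "('k::field \<Rightarrow> 'v::ab_group_add \<Rightarrow> 'v) \<Rightarrow> ('g \<Rightarrow> 'v set) \<Rightarrow> bool" where
  "graded_space s V \<longleftrightarrow> vector_space s \<and> (\<forall>a. Modules.module.subspace s (V a))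
     \<and> (\<forall>x. \<exists>!p. finite {a. p a \<noteq> 0} \<and> (\<forall>a. p a \<in> V a) \<and> x = sum p {a. p a \<noteq> 0})"

definition even_map :: "('g \<Rightarrow> 'v set) \<Rightarrow> ('g \<Rightarrow> 'w set) \<Rightarrow> ('v \<Rightarrow> 'w) \<Rightarrow> bool" where
  "even_map V W f \<longleftrightarrow> (\<forall>a x. x \<in> V a \<longrightarrow> f x \<in> W a)"

definition color_hom_lie ::
  "('k::field \<Rightarrow> 'L::ab_group_add \<Rightarrow> 'L) \<Rightarrow> ('g::ab_group_add \<Rightarrow> 'L set) \<Rightarrow>
   ('L \<Rightarrow> 'L \<Rightarrow> 'L) \<Rightarrow> ('L \<Rightarrow> 'L) \<Rightarrow> ('g \<Rightarrow> 'g \<Rightarrow> 'k) \<Rightarrow> bool" where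
  "color_hom_lie s G br \<alpha> \<epsilon> \<longleftrightarrow> graded_space s G \<and> bichar \<epsilon>
     \<and> (\<forall>y. Vector_Spaces.linear s s (\<lambda>x. br x y)) \<and> (\<forall>x. Vector_Spaces.linear s s (br x))
     \<and> (\<forall>a b x y. x \<in> G a \<longrightarrow> y \<in> G b \<longrightarrow> br x y \<in> G (a + b))
     \<and> Vector_Spaces.linear s s \<alpha> \<and> even_map G G \<alpha>
     \<and> (\<forall>a b x y. x \<in> G a \<longrightarrow> y \<in> G b \<longrightarrow> br x y = - s (\<epsilon> a b) (br y x))
     \<and> (\<forall>a b c x y z. x \<in> G a \<longrightarrow> y \<in> G b \<longrightarrow> z \<in> G c \<longrightarrow>
          s (\<epsilon> c a) (br (\<alpha> x) (br y z)) + s (\<epsilon> a b) (br (\<alpha> y) (br z x))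
          + s (\<epsilon> b c) (br (\<alpha> z) (br x y)) = 0)"

definition multiplicative :: "('L \<Rightarrow> 'L \<Rightarrow> 'L) \<Rightarrow> ('L \<Rightarrow> 'L) \<Rightarrow> bool" where
  "multiplicative br \<alpha> \<longleftrightarrow> (\<forall>x y. \<alpha> (br x y) = br (\<alpha> x) (\<alpha> y))"

definition quadratic_form ::
  "('k::field \<Rightarrow> 'L::ab_group_add \<Rightarrow> 'L) \<Rightarrow> ('g::ab_group_add \<Rightarrow> 'L set) \<Rightarrow>
   ('L \<Rightarrow> 'L \<Rightarrow> 'L) \<Rightarrow> ('L \<Rightarrow> 'L) \<Rightarrow> ('g \<Rightarrow> 'g \<Rightarrow> 'k) \<Rightarrow> ('L \<Rightarrow> 'L \<Rightarrow> 'k) \<Rightarrow> bool" where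
  "quadratic_form s G br \<alpha> \<epsilon> B \<longleftrightarrow>
     (\<forall>y. Vector_Spaces.linear s (*) (\<lambda>x. B x y)) \<and> (\<forall>x. Vector_Spaces.linear s (*) (B x))
     \<and> (\<forall>x. (\<forall>y. B x y = 0) \<longrightarrow> x = 0)
     \<and> (\<forall>a b x y. x \<in> G a \<longrightarrow> y \<in> G b \<longrightarrow> B x y = \<epsilon> a b * B y x)
     \<and> (\<forall>x y z. B (br x y) z = B x (br y z))
     \<and> (\<forall>x y. B (\<alpha> x) y = B x (\<alpha> y))"

definition representation ::
  "('k::field \<Rightarrow> 'L::ab_group_add \<Rightarrow> 'L) \<Rightarrow> ('g::ab_group_add \<Rightarrow> 'L set) \<Rightarrow>
   ('L \<Rightarrow> 'L \<Rightarrow> 'L) \<Rightarrow> ('L \<Rightarrow> 'L) \<Rightarrow> ('g \<Rightarrow> 'g \<Rightarrow> 'k) \<Rightarrow>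
   ('k \<Rightarrow> 'M::ab_group_add \<Rightarrow> 'M) \<Rightarrow> ('g \<Rightarrow> 'M set) \<Rightarrow> ('L \<Rightarrow> 'M \<Rightarrow> 'M) \<Rightarrow> ('M \<Rightarrow> 'M) \<Rightarrow> bool" where
  "representation s G br \<alpha> \<epsilon> sM GM \<rho> \<beta> \<longleftrightarrow> graded_space sM GM
     \<and> (\<forall>m. Vector_Spaces.linear s sM (\<lambda>x. \<rho> x m)) \<and> (\<forall>x. Vector_Spaces.linear sM sM (\<rho> x))
     \<and> (\<forall>a b x m. x \<in> G a \<longrightarrow> m \<in> GM b \<longrightarrow> \<rho> x m \<in> GM (a + b))
     \<and> Vector_Spaces.linear sM sM \<beta> \<and> even_map GM GM \<beta>
     \<and> (\<forall>a b x y m. x \<in> G a \<longrightarrow> y \<in> G b \<longrightarrow>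
          \<rho> (br x y) (\<beta> m) = \<rho> (\<alpha> x) (\<rho> y m) - sM (\<epsilon> a b) (\<rho> (\<alpha> y) (\<rho> x m)))
     \<and> (\<forall>x m. \<beta> (\<rho> x m) = \<rho> (\<alpha> x) (\<beta> m))"

text \<open>Homogeneous elements of degree c of the graded dual M*: linear forms vanishing on
  M_d for d \<noteq> -c.\<close>
definition dual_hom :: "('k::field \<Rightarrow> 'M::ab_group_add \<Rightarrow> 'M) \<Rightarrow> ('g::ab_group_add \<Rightarrow> 'M set) \<Rightarrow>
   'g \<Rightarrow> ('M \<Rightarrow> 'k) \<Rightarrow> bool" where
  "dual_hom sM GM c f \<longleftrightarrow> Vector_Spaces.linear sM (*) f \<and> (\<forall>d m. d \<noteq> - c \<longrightarrow> m \<in> GM d \<longrightarrow> f m = 0)"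

text \<open>rho_tilde(x)(f) = - eps(x,f) f o rho(x), for x of degree a and f of degree c.\<close>
definition rho_t :: "('g \<Rightarrow> 'g \<Rightarrow> 'k::field) \<Rightarrow> ('L \<Rightarrow> 'M \<Rightarrow> 'M) \<Rightarrow> 'g \<Rightarrow> 'g \<Rightarrow> 'L \<Rightarrow> ('M \<Rightarrow> 'k) \<Rightarrow> ('M \<Rightarrow> 'k)" where
  "rho_t \<epsilon> \<rho> a c x f = (\<lambda>n. - (\<epsilon> a c * f (\<rho> x n)))"

definition beta_t :: "('M \<Rightarrow> 'M) \<Rightarrow> ('M \<Rightarrow> 'k) \<Rightarrow> ('M \<Rightarrow> 'k)" where
  "beta_t \<beta> f = f \<circ> \<beta>"

text \<open>rho_tilde is a representation on (M*, beta_tilde), written out on homogeneous elements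
  (the identities are linear in f, so this is equivalent to the statement on all of M*).\<close>
definition dual_representation ::
  "('k::field \<Rightarrow> 'L::ab_group_add \<Rightarrow> 'L) \<Rightarrow> ('g::ab_group_add \<Rightarrow> 'L set) \<Rightarrow>
   ('L \<Rightarrow> 'L \<Rightarrow> 'L) \<Rightarrow> ('L \<Rightarrow> 'L) \<Rightarrow> ('g \<Rightarrow> 'g \<Rightarrow> 'k) \<Rightarrow>
   ('k \<Rightarrow> 'M::ab_group_add \<Rightarrow> 'M) \<Rightarrow> ('g \<Rightarrow> 'M set) \<Rightarrow> ('L \<Rightarrow> 'M \<Rightarrow> 'M) \<Rightarrow> ('M \<Rightarrow> 'M) \<Rightarrow> bool" where
  "dual_representation s G br \<alpha> \<epsilon> sM GM \<rho> \<beta> \<longleftrightarrow>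
     (\<forall>a b c x y f. x \<in> G a \<longrightarrow> y \<in> G b \<longrightarrow> dual_hom sM GM c f \<longrightarrow>
        rho_t \<epsilon> \<rho> (a + b) c (br x y) (beta_t \<beta> f)
        = (\<lambda>n. rho_t \<epsilon> \<rho> a (b + c) (\<alpha> x) (rho_t \<epsilon> \<rho> b c y f) n
               - \<epsilon> a b * rho_t \<epsilon> \<rho> b (a + c) (\<alpha> y) (rho_t \<epsilon> \<rho> a c x f) n))
     \<and> (\<forall>a c x f. x \<in> G a \<longrightarrow> dual_hom sM GM c f \<longrightarrow>
        beta_t \<beta> (rho_t \<epsilon> \<rho> a c x f) = rho_t \<epsilon> \<rho> a c (\<alpha> x) (beta_t \<beta> f))"

end

theory Submission
  imports Defs
begin

lemma eps_id:
  fixes \<epsilon> :: "'g::ab_group_add \<Rightarrow> 'g \<Rightarrow> 'k::field"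
  assumes "bichar \<epsilon>"
  shows "\<epsilon> (d + a + b) c * \<epsilon> d a = \<epsilon> a b * (\<epsilon> (d + b) (a + c) * \<epsilon> a c)"
proof -
  have l: "\<And>x y z. \<epsilon> (x + y) z = \<epsilon> x z * \<epsilon> y z" and r: "\<And>x y z. \<epsilon> x (y + z) = \<epsilon> x y * \<epsilon> x z"
    and s: "\<epsilon> a b * \<epsilon> b a = 1" using assms unfolding bichar_def by auto
  have "\<epsilon> a b * (\<epsilon> (d + b) (a + c) * \<epsilon> a c) = (\<epsilon> a b * \<epsilon> b a) * (\<epsilon> d a * \<epsilon> d c * \<epsilon> b c * \<epsilon> a c)"
    by (simp add: l r ac_simps)
  also have "\<dots> = \<epsilon> (d + a + b) c * \<epsilon> d a" by (simp add: s l ac_simps)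
  finally show ?thesis by simp
qed

theorem mainTheorem13:
  fixes sL :: "'k::field_char_0 \<Rightarrow> 'L::ab_group_add \<Rightarrow> 'L"
    and G :: "'g::ab_group_add \<Rightarrow> 'L set"
    and br :: "'L \<Rightarrow> 'L \<Rightarrow> 'L" and \<alpha> :: "'L \<Rightarrow> 'L"
    and \<epsilon> :: "'g \<Rightarrow> 'g \<Rightarrow> 'k" and B :: "'L \<Rightarrow> 'L \<Rightarrow> 'k"
    and sM :: "'k \<Rightarrow> 'M::ab_group_add \<Rightarrow> 'M" and GM :: "'g \<Rightarrow> 'M set"
    and \<rho> :: "'L \<Rightarrow> 'M \<Rightarrow> 'M" and \<beta> :: "'M \<Rightarrow> 'M"
    and D :: "'M \<Rightarrow> ('M \<Rightarrow> 'k) \<Rightarrow> 'L"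
  assumes lie: "color_hom_lie sL G br \<alpha> \<epsilon>"
    and mult: "multiplicative br \<alpha>"
    and quad: "quadratic_form sL G br \<alpha> \<epsilon> B"
    and rep: "representation sL G br \<alpha> \<epsilon> sM GM \<rho> \<beta>"
    and alpha_inv: "\<forall>x. \<alpha> (\<alpha> x) = x"
    and beta_inv: "\<forall>m. \<beta> (\<beta> m) = m"
    and dual_rep: "dual_representation sL G br \<alpha> \<epsilon> sM GM \<rho> \<beta>"
    and D_def: "\<forall>a b c x m f. x \<in> G a \<longrightarrow> m \<in> GM b \<longrightarrow> dual_hom sM GM c f \<longrightarrow>
                  B x (D m f) = \<epsilon> (a + b) c * f (\<rho> (\<alpha> x) m)"
    and D_even: "\<forall>b c m f. m \<in> GM b \<longrightarrow> dual_hom sM GM c f \<longrightarrow> D m f \<in> G (b + c)"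
    and D_lin_m: "\<forall>c f. dual_hom sM GM c f \<longrightarrow> Vector_Spaces.linear sM sL (\<lambda>m. D m f)"
    and D_add_f: "\<forall>m c c' f g. dual_hom sM GM c f \<longrightarrow> dual_hom sM GM c' g \<longrightarrow>
                    D m (\<lambda>n. f n + g n) = D m f + D m g"
    and D_scale_f: "\<forall>m c f k. dual_hom sM GM c f \<longrightarrow> D m (\<lambda>n. k * f n) = sL k (D m f)"
    and x_hom: "x \<in> G a" and m_hom: "m \<in> GM b" and f_hom: "dual_hom sM GM c f"
  shows "br x (D m f) = D (\<rho> x m) (beta_t \<beta> f) + sL (\<epsilon> a b) (D (\<beta> m) (rho_t \<epsilon> \<rho> a c x f))"
proof -
  note lin_hom = module_hom_iff_linear[THEN iffD2]
  have L: "graded_space sL G \<and> bichar \<epsilon>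
     \<and> (\<forall>a b x y. x \<in> G a \<longrightarrow> y \<in> G b \<longrightarrow> br x y \<in> G (a + b))
     \<and> even_map G G \<alpha>"
    using lie unfolding color_hom_lie_def by blast
  have bich: "bichar \<epsilon>" and Ggr: "graded_space sL G"
    and brG: "\<And>a b x y. x \<in> G a \<Longrightarrow> y \<in> G b \<Longrightarrow> br x y \<in> G (a + b)"
    and alG: "\<And>a x. x \<in> G a \<Longrightarrow> \<alpha> x \<in> G a"
    using L unfolding even_map_def by blast+
  have Q: "(\<forall>y. Vector_Spaces.linear sL (*) (\<lambda>x. B x y)) \<and> (\<forall>x. Vector_Spaces.linear sL (*) (B x))
     \<and> (\<forall>x. (\<forall>y. B x y = 0) \<longrightarrow> x = 0)
     \<and> (\<forall>a b x y. x \<in> G a \<longrightarrow> y \<in> G b \<longrightarrow> B x y = \<epsilon> a b * B y x)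
     \<and> (\<forall>x y z. B (br x y) z = B x (br y z))"
    using quad unfolding quadratic_form_def by blast
  have Blin1: "\<And>y. module_hom sL (*) (\<lambda>x. B x y)" and Blin2: "\<And>x. module_hom sL (*) (B x)"
    using Q lin_hom by blast+
  have Bnd: "\<And>x. (\<forall>y. B x y = 0) \<Longrightarrow> x = 0"
    and Bsym: "\<And>a b x y. x \<in> G a \<Longrightarrow> y \<in> G b \<Longrightarrow> B x y = \<epsilon> a b * B y x"
    and Binv: "\<And>x y z. B (br x y) z = B x (br y z)"
    using Q by blast+
  have R: "(\<forall>x. Vector_Spaces.linear sM sM (\<rho> x))
     \<and> (\<forall>a b x m. x \<in> G a \<longrightarrow> m \<in> GM b \<longrightarrow> \<rho> x m \<in> GM (a + b))
     \<and> Vector_Spaces.linear sM sM \<beta> \<and> even_map GM GM \<beta>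
     \<and> (\<forall>a b x y m. x \<in> G a \<longrightarrow> y \<in> G b \<longrightarrow>
          \<rho> (br x y) (\<beta> m) = \<rho> (\<alpha> x) (\<rho> y m) - sM (\<epsilon> a b) (\<rho> (\<alpha> y) (\<rho> x m)))
     \<and> (\<forall>x m. \<beta> (\<rho> x m) = \<rho> (\<alpha> x) (\<beta> m))"
    using rep unfolding representation_def by blast
  have rhoG: "\<And>a b x m. x \<in> G a \<Longrightarrow> m \<in> GM b \<Longrightarrow> \<rho> x m \<in> GM (a + b)"
    and betaG: "\<And>a m. m \<in> GM a \<Longrightarrow> \<beta> m \<in> GM a"
    and betalin: "Vector_Spaces.linear sM sM \<beta>"
    and rhobr: "\<And>a b x y m. x \<in> G a \<Longrightarrow> y \<in> G b \<Longrightarrow>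
          \<rho> (br x y) (\<beta> m) = \<rho> (\<alpha> x) (\<rho> y m) - sM (\<epsilon> a b) (\<rho> (\<alpha> y) (\<rho> x m))"
    and betarho: "\<And>x m. \<beta> (\<rho> x m) = \<rho> (\<alpha> x) (\<beta> m)"
    using R unfolding even_map_def by blast+
  have rholin: "\<And>x. module_hom sM sM (\<rho> x)" using R lin_hom by blast
  have flin: "Vector_Spaces.linear sM (*) f" and fvan: "\<And>d m. d \<noteq> - c \<Longrightarrow> m \<in> GM d \<Longrightarrow> f m = 0"
    using f_hom unfolding dual_hom_def by auto
  have fhom: "module_hom sM (*) f" using flin by (rule lin_hom)
  have fb: "dual_hom sM GM c (beta_t \<beta> f)"
    unfolding dual_hom_def beta_t_def
    using Vector_Spaces.linear_compose[OF betalin flin] fvan betaG by auto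
  have fr: "dual_hom sM GM (a + c) (rho_t \<epsilon> \<rho> a c x f)"
  proof -
    have vs: "vector_space sM" "vector_space ((*) :: 'k \<Rightarrow> 'k \<Rightarrow> 'k)"
      using flin unfolding linear_iff by auto
    have "Vector_Spaces.linear sM (*) (rho_t \<epsilon> \<rho> a c x f)"
      unfolding linear_iff rho_t_def
    proof (intro conjI vs allI)
      fix u v
      show "- (\<epsilon> a c * f (\<rho> x (u + v))) = - (\<epsilon> a c * f (\<rho> x u)) + - (\<epsilon> a c * f (\<rho> x v))"
        by (simp only: module_hom.add[OF rholin] module_hom.add[OF fhom] distrib_left minus_add_distrib)
    next
      fix k u
      show "- (\<epsilon> a c * f (\<rho> x (sM k u))) = k * - (\<epsilon> a c * f (\<rho> x u))"
        by (simp only: module_hom.scale[OF rholin] module_hom.scale[OF fhom] mult.left_commute mult_minus_right)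
    qed
    moreover have "\<And>d n. d \<noteq> - (a + c) \<Longrightarrow> n \<in> GM d \<Longrightarrow> rho_t \<epsilon> \<rho> a c x f n = 0"
    proof -
      fix d n assume dne: "d \<noteq> - (a + c)" and n: "n \<in> GM d"
      have "a + d \<noteq> - c"
      proof
        assume h: "a + d = - c"
        have "d = (a + d) - a" by simp
        also have "\<dots> = - (a + c)" unfolding h by (simp add: algebra_simps)
        finally show False using dne by simp
      qed
      moreover have "\<rho> x n \<in> GM (a + d)" using rhoG[OF x_hom n] .
      ultimately show "rho_t \<epsilon> \<rho> a c x f n = 0" unfolding rho_t_def using fvan by auto
    qed
    ultimately show ?thesis unfolding dual_hom_def by auto
  qed
  define D0 where "D0 = D m f"
  define D1 where "D1 = D (\<rho> x m) (beta_t \<beta> f)"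
  define D2 where "D2 = D (\<beta> m) (rho_t \<epsilon> \<rho> a c x f)"
  have D0G: "br x D0 \<in> G (a + b + c)" unfolding D0_def
    using brG[OF x_hom D_even[rule_format, OF m_hom f_hom]] by (simp add: add.assoc)
  have D1G: "D1 \<in> G (a + b + c)" unfolding D1_def
    using D_even[rule_format, OF rhoG[OF x_hom m_hom] fb] by simp
  have D2G: "D2 \<in> G (a + b + c)" unfolding D2_def
    using D_even[rule_format, OF betaG[OF m_hom] fr] by (simp add: ac_simps)
  have key: "B y (br x D0) = B y D1 + \<epsilon> a b * B y D2" if y: "y \<in> G d" for y d
  proof -
    have ay: "\<alpha> y \<in> G d" and ax: "\<alpha> x \<in> G a" using alG y x_hom by auto
    have "B y (br x D0) = B (br y x) D0" by (simp add: Binv)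
    also have "\<dots> = \<epsilon> (d + a + b) c * f (\<rho> (\<alpha> (br y x)) m)"
      unfolding D0_def using D_def brG[OF y x_hom] m_hom f_hom by auto
    also have "\<rho> (\<alpha> (br y x)) m = \<rho> (br (\<alpha> y) (\<alpha> x)) (\<beta> (\<beta> m))"
      using mult beta_inv unfolding multiplicative_def by simp
    also have "\<dots> = \<rho> y (\<rho> (\<alpha> x) (\<beta> m)) - sM (\<epsilon> d a) (\<rho> x (\<rho> (\<alpha> y) (\<beta> m)))"
      using rhobr[OF ay ax] alpha_inv by simp
    also have "f \<dots> = f (\<rho> y (\<rho> (\<alpha> x) (\<beta> m))) - \<epsilon> d a * f (\<rho> x (\<rho> (\<alpha> y) (\<beta> m)))"
      using module_hom.diff[OF fhom] module_hom.scale[OF fhom] by simp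
    finally have L: "B y (br x D0) = \<epsilon> (d + a + b) c * (f (\<rho> y (\<rho> (\<alpha> x) (\<beta> m))) - \<epsilon> d a * f (\<rho> x (\<rho> (\<alpha> y) (\<beta> m))))" .
    have "B y D1 = \<epsilon> (d + (a + b)) c * beta_t \<beta> f (\<rho> (\<alpha> y) (\<rho> x m))"
      unfolding D1_def using D_def y rhoG[OF x_hom m_hom] fb by auto
    also have "beta_t \<beta> f (\<rho> (\<alpha> y) (\<rho> x m)) = f (\<rho> y (\<rho> (\<alpha> x) (\<beta> m)))"
      unfolding beta_t_def using betarho alpha_inv by simp
    finally have R1: "B y D1 = \<epsilon> (d + a + b) c * f (\<rho> y (\<rho> (\<alpha> x) (\<beta> m)))" by (simp add: add.assoc)
    have R2: "B y D2 = \<epsilon> (d + b) (a + c) * (- (\<epsilon> a c * f (\<rho> x (\<rho> (\<alpha> y) (\<beta> m)))))"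
      unfolding D2_def using D_def y betaG[OF m_hom] fr by (auto simp: rho_t_def)
    show ?thesis unfolding L R1 R2 using eps_id[OF bich, of d a b c]
      by (simp add: algebra_simps)
  qed
  define \<Delta> where "\<Delta> = br x D0 - D1 - sL (\<epsilon> a b) D2"
  have hom0: "B \<Delta> y = 0" if y: "y \<in> G d" for y d
  proof -
    have "B \<Delta> y = B (br x D0) y - B D1 y - \<epsilon> a b * B D2 y"
      unfolding \<Delta>_def using module_hom.diff[OF Blin1] module_hom.scale[OF Blin1] by simp
    also have "\<dots> = \<epsilon> (a + b + c) d * (B y (br x D0) - B y D1 - \<epsilon> a b * B y D2)"
      using Bsym[OF D0G y] Bsym[OF D1G y] Bsym[OF D2G y] by (simp add: algebra_simps)
    also have "\<dots> = 0" using key[OF y] by simp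
    finally show ?thesis .
  qed
  have "\<forall>y. B \<Delta> y = 0"
  proof
    fix y
    obtain p where p: "finite {a. p a \<noteq> 0}" "\<forall>a. p a \<in> G a" "y = sum p {a. p a \<noteq> 0}"
      using Ggr unfolding graded_space_def by metis
    have "B \<Delta> y = (\<Sum>d\<in>{a. p a \<noteq> 0}. B \<Delta> (p d))"
      unfolding p(3) by (rule module_hom.sum[OF Blin2])
    also have "\<dots> = 0" using hom0 p(2) by (intro sum.neutral) blast
    finally show "B \<Delta> y = 0" .
  qed
  then have "\<Delta> = 0" by (rule Bnd)
  then show ?thesis unfolding \<Delta>_def D0_def D1_def D2_def by (simp add: algebra_simps)
qed

end
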